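(* Let $\kappa$ be a regular infinite cardinal. For each $i\in\{a,b\}$ (with $j$ the other player) there is a function $T_i:W^\kappa\to\Delta(W^\kappa,\mathrm{Pow}(W^\kappa))$ such that for all $w^\kappa\in W^\kappa$: (a) $T_i(u^\kappa)=T_i(w^\kappa)$ for all $u^\kappa\in P_i(w^\kappa)$; (b) $T_i(w^\kappa)(P_i(w^\kappa))=1$; (c) $T_i(w^\kappa)([X_0^\kappa=w_0])$ equals $1$ if $w_i^\kappa(0)=1$ and $\tfrac12$ if $w_i^\kappa(0)=0$; (d) for every $\beta<\kappa$, $T_i(w^\kappa)([X_j^\kappa(\beta)=w_j^\kappa(\beta)])$ equals $1$ if $w_i^\kappa(\beta+1)=1$ and $\tfrac12$ if $w_i^\kappa(\beta+1)=0$; (e) for every limit ordinal $\lambda<\kappa$, $T_i(w^\kappa)([\lambda\text{-par}(X_j^\kappa)=\lambda\text{-par}(w_j^\kappa)])$ equals $1$ if $w_i^\kappa(\lambda)=1$ and $\tfrac12$ if $w_i^\kappa(\lambda)=0$; (f) for all $0\le\beta<\alpha<\kappa$, all $u^\kappa,w^\kappa\in W^\kappa$ and all $E^\beta\subseteq W^\beta$: if $u^\kappa\upharpoonright\alpha=w^\kappa\upharpoonright\alpha$ then $T_i(u^\kappa)(\pi_{\beta,\kappa}^{-1}(E^\beta))=T_i(w^\kappa)(\pi_{\beta,\kappa}^{-1}(E^\beta))$.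
   Context: $\Delta(M,\mathrm{Pow}(M))$ is the set of finitely additive probability measures on all subsets of $M$. For an ordinal $\alpha\ge1$, a record of length $\alpha$ is a sequence $r=(r(\beta))_{\beta<\alpha}$ in $\{0,1\}$ such that for every limit ordinal $\lambda\le\alpha$ there is $\gamma<\lambda$ with $r(\beta)=0$ for all $\gamma\le\beta<\lambda$. Parity of ordinals: finite ordinals have the usual parity (0 is even); an infinite ordinal $\gamma=\hat\lambda+n$ ($\hat\lambda$ limit, $n$ finite) is even/odd as $n$ is. For a record $r$ of length $\alpha$ and limit $\lambda\le\alpha$, $o^\lambda(r)$ is the least ordinal $<\lambda$ with $r(\beta)=0$ for all $o^\lambda(r)\le\beta<\lambda$, and $\lambda\text{-par}(r)$ is the parity of $o^\lambda(r)$. $W^0=\{h,t\}$; for $\alpha\ge1$, $W^\alpha$ is the set of triples $w^\alpha=(w_0,w_a^\alpha,w_b^\alpha)$ with $w_0\in\{h,t\}$ and $w_a^\alpha,w_b^\alpha$ records of length $\alpha$. For $0<\beta\le\alpha$, $w^\alpha\upharpoonright\beta=(w_0,w_a^\alpha\upharpoonright\beta,w_b^\alpha\upharpoonright\beta)$ (restricting the sequences), and $w^\alpha\upharpoonright0=w_0$; $\pi_{\beta,\alpha}:W^\alpha\to W^\beta$, $w^\alpha\mapsto w^\alpha\upharpoonright\beta$. For $\alpha>0$, $i\in\{a,b\}$, $j$ the other player: $P_i(w^\alpha)$ is the set of $v^\alpha=(v_0,v_a^\alpha,v_b^\alpha)\in W^\alpha$ with $v_i^\alpha=w_i^\alpha$;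 $w_i^\alpha(0)=1\Rightarrow v_0=w_0$; for all $\beta$ with $\beta+1<\alpha$, $w_i^\alpha(\beta+1)=1\Rightarrow v_j^\alpha(\beta)=w_j^\alpha(\beta)$; for all limit $\lambda<\alpha$, $w_i^\alpha(\lambda)=1\Rightarrow\lambda\text{-par}(v_j^\alpha)=\lambda\text{-par}(w_j^\alpha)$. Notation: $[X_0^\kappa=w_0]=\{u\in W^\kappa:u_0=w_0\}$; $[X_j^\kappa(\beta)=c]=\{u\in W^\kappa:u_j^\kappa(\beta)=c\}$; $[\lambda\text{-par}(X_j^\kappa)=e]=\{u\in W^\kappa:\lambda\text{-par}(u_j^\kappa)=e\}$. *)

theory Defs
  imports Complex_Main
begin

(* Ordinals below kappa are the elements of a wellorder type 'k whose order type is kappa. *)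

datatype coin = H | T
datatype player = Pa | Pb

fun other :: "player \<Rightarrow> player" where
  "other Pa = Pb" | "other Pb = Pa"

definition ozero :: "'k::wellorder" where
  "ozero = (LEAST x. True)"

definition osucc :: "'k::wellorder \<Rightarrow> 'k" where
  "osucc x = (LEAST y. x < y)"

definition is_limit :: "'k::wellorder \<Rightarrow> bool" where
  "is_limit l \<longleftrightarrow> (\<exists>y. y < l) \<and> (\<forall>y<l. \<exists>z. y < z \<and> z < l)"

definition ord_even :: "'k::wellorder \<Rightarrow> bool" where
  "ord_even g \<longleftrightarrow> (\<exists>l n. (l = ozero \<or> is_limit l) \<and> g = (osucc ^^ n) l \<and> even n)"

definition zero_tail :: "'k::wellorder \<Rightarrow> ('k \<Rightarrow> bool) \<Rightarrow> 'k \<Rightarrow> bool" where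
  "zero_tail l r g \<longleftrightarrow> (\<forall>b. g \<le> b \<and> b < l \<longrightarrow> \<not> r b)"

definition is_record_len :: "'k::wellorder \<Rightarrow> ('k \<Rightarrow> bool) \<Rightarrow> bool" where
  "is_record_len a r \<longleftrightarrow> (\<forall>x. a \<le> x \<longrightarrow> \<not> r x) \<and>
     (\<forall>l. is_limit l \<and> l \<le> a \<longrightarrow> (\<exists>g<l. zero_tail l r g))"

(* record of length kappa: includes the limit kappa itself *)
definition is_record_kappa :: "('k::wellorder \<Rightarrow> bool) \<Rightarrow> bool" where
  "is_record_kappa r \<longleftrightarrow> (\<forall>l. is_limit l \<longrightarrow> (\<exists>g<l. zero_tail l r g)) \<and>
     (\<exists>g. \<forall>b. g \<le> b \<longrightarrow> \<not> r b)"

definition o_lim :: "'k::wellorder \<Rightarrow> ('k \<Rightarrow> bool) \<Rightarrow> 'k" where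
  "o_lim l r = (LEAST g. g < l \<and> zero_tail l r g)"

definition lim_par :: "'k::wellorder \<Rightarrow> ('k \<Rightarrow> bool) \<Rightarrow> bool" where
  "lim_par l r = ord_even (o_lim l r)"

type_synonym 'k world = "coin \<times> ('k \<Rightarrow> bool) \<times> ('k \<Rightarrow> bool)"

definition wrec :: "player \<Rightarrow> 'k world \<Rightarrow> ('k \<Rightarrow> bool)" where
  "wrec i w = (case i of Pa \<Rightarrow> fst (snd w) | Pb \<Rightarrow> snd (snd w))"

definition Wk :: "('k::wellorder) world set" where
  "Wk = {w. is_record_kappa (wrec Pa w) \<and> is_record_kappa (wrec Pb w)}"

(* W^beta for beta < kappa; for beta = ozero this encodes W^0 = {h,t} as (c, empty, empty) *)
definition W_at :: "'k::wellorder \<Rightarrow> 'k world set" where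
  "W_at b = {w. is_record_len b (wrec Pa w) \<and> is_record_len b (wrec Pb w)}"

definition restr :: "'k::wellorder \<Rightarrow> 'k world \<Rightarrow> 'k world" where
  "restr b w = (fst w, \<lambda>x. x < b \<and> wrec Pa w x, \<lambda>x. x < b \<and> wrec Pb w x)"

definition preim :: "'k::wellorder \<Rightarrow> 'k world set \<Rightarrow> 'k world set" where
  "preim b E = {u \<in> Wk. restr b u \<in> E}"

definition Pset :: "player \<Rightarrow> 'k::wellorder world \<Rightarrow> 'k world set" where
  "Pset i w = {v \<in> Wk. wrec i v = wrec i w
      \<and> (wrec i w ozero \<longrightarrow> fst v = fst w)
      \<and> (\<forall>b. wrec i w (osucc b) \<longrightarrow> wrec (other i) v b = wrec (other i) w b)
      \<and> (\<forall>l. is_limit l \<and> wrec i w l \<longrightarrow> lim_par l (wrec (other i) v) = lim_par l (wrec (other i) w))}"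

definition fa_prob :: "'a set \<Rightarrow> ('a set \<Rightarrow> real) \<Rightarrow> bool" where
  "fa_prob \<Omega> \<mu> \<longleftrightarrow> \<mu> \<Omega> = 1 \<and> (\<forall>A. A \<subseteq> \<Omega> \<longrightarrow> 0 \<le> \<mu> A) \<and>
     (\<forall>A B. A \<subseteq> \<Omega> \<and> B \<subseteq> \<Omega> \<and> A \<inter> B = {} \<longrightarrow> \<mu> (A \<union> B) = \<mu> A + \<mu> B)"

end

theory Submission
  imports Defs "HOL-Analysis.Analysis"
begin


locale kap =
  fixes dummy :: "'k::wellorder itself"
  assumes nomax: "\<exists>y::'k. x < y"
begin

lemma ozero_le: "ozero \<le> (x::'k)"
  unfolding ozero_def by (rule Least_le) simp

lemma osucc_gt: "x < osucc (x::'k)"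
  unfolding osucc_def using nomax[of x] by (metis LeastI)

lemma osucc_le: "x < y \<Longrightarrow> osucc (x::'k) \<le> y"
  unfolding osucc_def by (rule Least_le)

lemma osucc_mono: "x < y \<Longrightarrow> osucc (x::'k) < osucc y"
  using osucc_le osucc_gt order_le_less_trans by blast

lemma osucc_inj: "inj (osucc :: 'k \<Rightarrow> 'k)"
  by (metis injI linorder_neqE osucc_mono order_less_irrefl)

lemma osucc_less_limit: "is_limit l \<Longrightarrow> x < l \<Longrightarrow> osucc (x::'k) < l"
  unfolding is_limit_def by (meson osucc_le order_le_less_trans)

lemma limit_gt_ozero: "is_limit l \<Longrightarrow> ozero < (l::'k)"
  unfolding is_limit_def using ozero_le order_le_less_trans by blast

definition base :: "'k \<Rightarrow> bool" where "base l \<longleftrightarrow> l = ozero \<or> is_limit l"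

lemma base_not_succ: "base l \<Longrightarrow> l \<noteq> osucc (z::'k)"
proof
  assume b: "base l" and e: "l = osucc z"
  show False
  proof (cases "l = ozero")
    case True thus False using e osucc_gt[of z] ozero_le[of z] by simp
  next
    case False
    hence "is_limit l" using b base_def by blast
    then obtain q where "z < q" "q < l" using e osucc_gt[of z] unfolding is_limit_def by blast
    thus False using e osucc_le[of z q] by simp
  qed
qed

lemma rep_exists: "\<exists>l n. base l \<and> (x::'k) = (osucc ^^ n) l"
proof (induction x rule: less_induct)
  case (less x)
  show ?case
  proof (cases "base x")
    case True thus ?thesis by (metis funpow_0)
  next
    case False
    hence nz: "x \<noteq> ozero" and nl: "\<not> is_limit x" using base_def by auto
    have "ozero < x" using nz ozero_le[of x] by (simp add: order_le_less)
    then obtain y where y: "y < x" "\<forall>z. y < z \<longrightarrow> \<not> z < x" using nl unfolding is_limit_def by blast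
    have "x = osucc y"
      using osucc_le[OF y(1)] y(2) osucc_gt[of y] by (simp add: order_le_less)
    moreover obtain l n where "base l" "y = (osucc ^^ n) l" using less y(1) by blast
    ultimately show ?thesis by (metis funpow.simps(2) comp_apply)
  qed
qed

lemma rep_unique: "base l \<Longrightarrow> base l' \<Longrightarrow> (osucc ^^ n) l = (osucc ^^ m) (l'::'k) \<Longrightarrow> n = m"
proof (induction n arbitrary: m)
  case 0
  show ?case
  proof (cases m)
    case (Suc m') thus ?thesis using 0 base_not_succ by auto
  qed simp
next
  case (Suc n)
  show ?case
  proof (cases m)
    case 0 thus ?thesis using Suc base_not_succ by (metis funpow.simps(2) comp_apply funpow_0)
  next
    case (Suc m')
    with Suc.prems have "(osucc ^^ n) l = (osucc ^^ m') l'"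
      using osucc_inj by (simp add: inj_eq)
    thus ?thesis using Suc Suc.IH Suc.prems by simp
  qed
qed

lemma ord_even_rep: "base l \<Longrightarrow> x = (osucc ^^ n) l \<Longrightarrow> ord_even (x::'k) \<longleftrightarrow> even n"
  unfolding ord_even_def using rep_unique base_def by metis

lemma ord_even_succ: "ord_even (osucc (x::'k)) \<longleftrightarrow> \<not> ord_even x"
proof -
  obtain l n where b: "base l" "x = (osucc ^^ n) l" using rep_exists by blast
  hence "osucc x = (osucc ^^ Suc n) l" by simp
  thus ?thesis using ord_even_rep[OF b] ord_even_rep[OF b(1), of "osucc x" "Suc n"] by simp
qed

lemma record_finite:
  assumes "is_record_kappa r" shows "finite {x::'k. r x}"
proof (rule ccontr)
  let ?R = "{x. r x}"
  assume inf: "infinite ?R"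
  show False
  proof (cases "\<exists>x. infinite {y. r y \<and> y < x}")
    case True
    define l where "l = (LEAST x. infinite {y. r y \<and> y < x})"
    have il: "infinite {y. r y \<and> y < l}" using True unfolding l_def by (rule LeastI_ex)
    have fb: "finite {y. r y \<and> y < z}" if "z < l" for z
      using not_less_Least[OF that[unfolded l_def]] by blast
    have lim: "is_limit l"
      unfolding is_limit_def
    proof
      show "\<exists>y. y < l" using il by (metis (no_types, lifting) Collect_empty_eq finite.emptyI)
      show "\<forall>y<l. \<exists>z>y. z < l"
      proof (intro allI impI)
        fix y assume "y < l"
        have "infinite ({x. r x \<and> x < l} - {x. r x \<and> x < y} - {y})"
          using il fb[OF \<open>y<l\<close>] by auto
        hence "{x. r x \<and> x < l} - {x. r x \<and> x < y} - {y} \<noteq> {}" by (metis finite.emptyI)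
        then obtain z where "z \<in> {x. r x \<and> x < l} - {x. r x \<and> x < y} - {y}"
          by blast
        hence z: "z < l" "\<not> z < y" "z \<noteq> y" by auto
        hence "y < z" using linorder_neqE by blast
        thus "\<exists>z>y. z < l" using z(1) by blast
      qed
    qed
    then obtain g where g: "g < l" "zero_tail l r g"
      using assms unfolding is_record_kappa_def by blast
    have "{y. r y \<and> y < l} \<subseteq> {y. r y \<and> y < g}"
      using g(2) unfolding zero_tail_def by (auto simp: not_less[symmetric])
    thus False using il fb[OF g(1)] finite_subset by blast
  next
    case False
    obtain g where "\<forall>b. g \<le> b \<longrightarrow> \<not> r b" using assms unfolding is_record_kappa_def by blast
    hence "?R \<subseteq> {y. r y \<and> y < g}" by (auto simp: not_less[symmetric])
    thus False using False inf finite_subset by blast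
  qed
qed

lemma finite_record:
  assumes fin: "finite {x::'k. r x}" shows "is_record_kappa r"
  unfolding is_record_kappa_def
proof
  show "\<forall>l. is_limit l \<longrightarrow> (\<exists>g<l. zero_tail l r g)"
  proof (intro allI impI)
    fix l :: 'k assume l: "is_limit l"
    let ?B = "{x. r x \<and> x < l}"
    have fB: "finite ?B" using fin by (rule finite_subset[rotated]) auto
    show "\<exists>g<l. zero_tail l r g"
    proof (cases "?B = {}")
      case True
      thus ?thesis using limit_gt_ozero[OF l] unfolding zero_tail_def by auto
    next
      case False
      have m: "Max ?B < l" "r (Max ?B)" using Max_in[OF fB False] by auto
      show ?thesis
      proof (intro exI conjI)
        show "osucc (Max ?B) < l" using osucc_less_limit[OF l m(1)] .
        show "zero_tail l r (osucc (Max ?B))" unfolding zero_tail_def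
        proof (intro allI impI)
          fix b assume b: "osucc (Max ?B) \<le> b \<and> b < l"
          hence "Max ?B < b" using osucc_gt[of "Max ?B"] by (meson order_less_le_trans)
          thus "\<not> r b" using Max_ge[OF fB, of b] b by auto
        qed
      qed
    qed
  qed
  show "\<exists>g. \<forall>b. g \<le> b \<longrightarrow> \<not> r b"
  proof (cases "{x. r x} = {}")
    case True thus ?thesis by auto
  next
    case False
    show ?thesis
    proof (intro exI allI impI)
      fix b assume b: "osucc (Max {x. r x}) \<le> b"
      hence "Max {x. r x} < b" using osucc_gt[of "Max {x. r x}"] by (meson order_less_le_trans)
      thus "\<not> r b" using Max_ge[OF fin, of b] by auto
    qed
  qed
qed

lemma o_lim_eq:
  assumes l: "is_limit l" and c: "c < l" "r c" and z: "\<forall>x. c < x \<and> x < l \<longrightarrow> \<not> r x"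
  shows "o_lim l r = osucc (c::'k)"
  unfolding o_lim_def
proof (rule Least_equality)
  show "osucc c < l \<and> zero_tail l r (osucc c)"
    using osucc_less_limit[OF l c(1)] z osucc_gt[of c] unfolding zero_tail_def
    by (meson order_less_le_trans)
  fix y assume "y < l \<and> zero_tail l r y"
  hence "c < y" using c unfolding zero_tail_def by (meson not_less)
  thus "osucc c \<le> y" by (rule osucc_le)
qed

end

lemma o_lim_cong: "(\<forall>x<l. r x = r' x) \<Longrightarrow> o_lim l r = o_lim l r'"
  unfolding o_lim_def zero_tail_def by (metis (no_types, lifting) order_le_less_trans)

lemma lim_par_cong: "(\<forall>x<l. r x = r' x) \<Longrightarrow> lim_par l r = lim_par l r'"
  unfolding lim_par_def using o_lim_cong by metis



definition mkw :: "player \<Rightarrow> coin \<Rightarrow> ('k \<Rightarrow> bool) \<Rightarrow> ('k \<Rightarrow> bool) \<Rightarrow> 'k world" where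
  "mkw i c x y = (c, if i = Pa then x else y, if i = Pa then y else x)"

lemma mkw_simps[simp]: "fst (mkw i c x y) = c" "wrec i (mkw i c x y) = x" "wrec (other i) (mkw i c x y) = y"
  by (cases i; simp add: mkw_def wrec_def)+

lemma restr_mkw: "restr b (mkw i c x y) = mkw i c (\<lambda>z. z < b \<and> x z) (\<lambda>z. z < b \<and> y z)"
  unfolding restr_def mkw_def wrec_def by (cases i) simp_all

lemma restr_eqD:
  assumes "restr a u = restr a v"
  shows "fst u = fst v" "\<And>z. z < a \<Longrightarrow> wrec p u z = wrec p v z"
proof -
  show "fst u = fst v" using assms by (simp add: restr_def)
  fix z assume "z < a"
  thus "wrec p u z = wrec p v z" using assms
    by (cases p) (auto simp: restr_def wrec_def fun_eq_iff)
qed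

definition Kset :: "('k::wellorder \<Rightarrow> bool) \<Rightarrow> 'k set" where "Kset r = {c. r (osucc c)}"
definition Tset :: "('k::wellorder \<Rightarrow> bool) \<Rightarrow> 'k set \<Rightarrow> 'k set" where
  "Tset r S = {l. is_limit l \<and> (r l \<or> l \<in> S)}"
definition mpos :: "('k::wellorder \<Rightarrow> bool) \<Rightarrow> 'k set \<Rightarrow> 'k \<Rightarrow> 'k" where
  "mpos r S l = Max (insert ozero {x. x < l \<and> (x \<in> Kset r \<or> x \<in> S \<or> x \<in> Tset r S)})"
definition tpar :: "('k::wellorder \<Rightarrow> bool) \<Rightarrow> ('k \<Rightarrow> bool) \<Rightarrow> 'k set \<Rightarrow> 'k \<Rightarrow> bool" where
  "tpar r s \<tau> l = (if r l then lim_par l s else l \<in> \<tau>)"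
definition cpos :: "('k::wellorder \<Rightarrow> bool) \<Rightarrow> ('k \<Rightarrow> bool) \<Rightarrow> 'k set \<Rightarrow> 'k set \<Rightarrow> 'k \<Rightarrow> 'k" where
  "cpos r s S \<tau> l = (if ord_even (osucc (osucc (mpos r S l))) = tpar r s \<tau> l
      then osucc (mpos r S l) else osucc (osucc (mpos r S l)))"
definition snew :: "('k::wellorder \<Rightarrow> bool) \<Rightarrow> ('k \<Rightarrow> bool) \<Rightarrow> 'k set \<Rightarrow> 'k set \<Rightarrow> 'k set \<Rightarrow> 'k \<Rightarrow> bool" where
  "snew r s S \<sigma> \<tau> c = (if r (osucc c) then s c else if c \<in> S then c \<in> \<sigma>
      else c \<in> cpos r s S \<tau> ` Tset r S)"
definition vpt :: "player \<Rightarrow> 'k::wellorder world \<Rightarrow> 'k set \<Rightarrow> coin \<times> 'k set \<times> 'k set \<Rightarrow> 'k world" where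
  "vpt i w S om = mkw i (if wrec i w ozero then fst w else fst om) (wrec i w)
      (snew (wrec i w) (wrec (other i) w) S (fst (snd om)) (snd (snd om)))"
definition Om :: "'k set \<Rightarrow> (coin \<times> 'k set \<times> 'k set) set" where
  "Om S = UNIV \<times> Pow S \<times> Pow S"
definition mu :: "player \<Rightarrow> 'k set \<Rightarrow> 'k::wellorder world \<Rightarrow> 'k world set \<Rightarrow> real" where
  "mu i S w A = real (card {om \<in> Om S. vpt i w S om \<in> A}) / real (card (Om S))"

lemma UNIV_coin: "(UNIV :: coin set) = {H, T}" using coin.exhaust by auto

lemma Om_finite: "finite S \<Longrightarrow> finite (Om S)"
  by (simp add: Om_def UNIV_coin)

lemma Om_pos: "finite S \<Longrightarrow> 0 < card (Om S)"
  using Om_finite by (auto simp: Om_def card_gt_0_iff)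

lemma half_gen:
  assumes "finite A" "\<And>x. x \<in> A \<Longrightarrow> f x \<in> A" "\<And>x. x \<in> A \<Longrightarrow> f (f x) = x"
    "\<And>x. x \<in> A \<Longrightarrow> P (f x) \<longleftrightarrow> \<not> P x"
  shows "2 * card {x\<in>A. P x} = card A"
proof -
  have "bij_betw f {x\<in>A. P x} {x\<in>A. \<not> P x}"
    by (rule bij_betw_byWitness[where f'=f]) (use assms in auto)
  hence "card {x\<in>A. P x} = card {x\<in>A. \<not> P x}" by (rule bij_betw_same_card)
  moreover have "card A = card {x\<in>A. P x} + card {x\<in>A. \<not> P x}"
  proof -
    have "A = {x\<in>A. P x} \<union> {x\<in>A. \<not> P x}" by blast
    hence "card A = card ({x\<in>A. P x} \<union> {x\<in>A. \<not> P x})" by (rule arg_cong)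
    also have "\<dots> = card {x\<in>A. P x} + card {x\<in>A. \<not> P x}"
      by (rule card_Un_disjoint) (use assms(1) in auto)
    finally show ?thesis .
  qed
  ultimately show ?thesis by simp
qed

lemma mu_half:
  assumes "finite S" "\<And>x. x \<in> Om S \<Longrightarrow> f x \<in> Om S" "\<And>x. x \<in> Om S \<Longrightarrow> f (f x) = x"
    "\<And>x. x \<in> Om S \<Longrightarrow> vpt i w S (f x) \<in> A \<longleftrightarrow> \<not> vpt i w S x \<in> A"
  shows "mu i S w A = 1/2"
proof -
  have "2 * card {x\<in>Om S. vpt i w S x \<in> A} = card (Om S)"
    by (rule half_gen[where P="\<lambda>x. vpt i w S x \<in> A" and f=f]) (use assms Om_finite in auto)
  hence h: "real (card (Om S)) = 2 * real (card {x\<in>Om S. vpt i w S x \<in> A})"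
    using arg_cong[of _ _ real] by force
  have "0 < real (card (Om S))" using Om_pos[OF assms(1)] by simp
  thus ?thesis unfolding mu_def h by (simp add: field_simps)
qed

lemma mu_one:
  assumes "finite S" "\<And>x. x \<in> Om S \<Longrightarrow> vpt i w S x \<in> A"
  shows "mu i S w A = 1"
proof -
  have "{x\<in>Om S. vpt i w S x \<in> A} = Om S" using assms by auto
  thus ?thesis unfolding mu_def using Om_pos[OF assms(1)] by simp
qed

lemma mu_range: "finite S \<Longrightarrow> mu i S w A \<in> {0..1}"
  unfolding mu_def using Om_pos Om_finite
  by (auto intro!: card_mono simp: divide_le_eq_1)

lemma mu_add:
  assumes "finite S" "A \<inter> B = {}"
  shows "mu i S w (A \<union> B) = mu i S w A + mu i S w B"
proof -
  have "{x\<in>Om S. vpt i w S x \<in> A \<union> B} = {x\<in>Om S. vpt i w S x \<in> A} \<union> {x\<in>Om S. vpt i w S x \<in> B}"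
    by auto
  moreover have "card ({x\<in>Om S. vpt i w S x \<in> A} \<union> {x\<in>Om S. vpt i w S x \<in> B})
     = card {x\<in>Om S. vpt i w S x \<in> A} + card {x\<in>Om S. vpt i w S x \<in> B}"
    by (rule card_Un_disjoint) (use assms finite_subset[OF _ Om_finite[OF assms(1)]] in auto)
  ultimately show ?thesis unfolding mu_def by (simp add: add_divide_distrib)
qed

context kap begin

lemma Kset_finite: "finite {x. r x} \<Longrightarrow> finite (Kset (r::'k \<Rightarrow> bool))"
  unfolding Kset_def using finite_vimageI[OF _ osucc_inj, of "{x. r x}"] by (simp add: vimage_def)

lemma Tset_finite: "finite {x. r x} \<Longrightarrow> finite S \<Longrightarrow> finite (Tset (r::'k \<Rightarrow> bool) S)"
  unfolding Tset_def by (rule finite_subset[of _ "{x. r x} \<union> S"]) auto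

lemma mpos_props:
  assumes l: "is_limit l" and fr: "finite {x. r x}" and fS: "finite S"
  shows "mpos r S l < (l::'k)"
    "\<And>x. x < l \<Longrightarrow> x \<in> Kset r \<or> x \<in> S \<or> x \<in> Tset r S \<Longrightarrow> x \<le> mpos r S l"
proof -
  let ?M = "insert ozero {x. x < l \<and> (x \<in> Kset r \<or> x \<in> S \<or> x \<in> Tset r S)}"
  have fM: "finite ?M"
    by (rule finite_subset[of _ "insert ozero (Kset r \<union> S \<union> Tset r S)"])
       (use Kset_finite[OF fr] Tset_finite[OF fr fS] fS in auto)
  have "Max ?M \<in> ?M" by (rule Max_in[OF fM]) simp
  thus "mpos r S l < l" unfolding mpos_def using limit_gt_ozero[OF l] by auto
  fix x assume "x < l" "x \<in> Kset r \<or> x \<in> S \<or> x \<in> Tset r S"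
  thus "x \<le> mpos r S l" unfolding mpos_def by (intro Max_ge[OF fM]) auto
qed

lemma cpos_props:
  assumes l: "is_limit l" and fr: "finite {x. r x}" and fS: "finite S"
  shows "mpos r S l < cpos r s S \<tau> l" "cpos r s S \<tau> l < (l::'k)"
proof -
  have m: "mpos r S l < l" by (rule mpos_props(1)[OF assms])
  have a1: "mpos r S l < osucc (mpos r S l)" "osucc (mpos r S l) < osucc (osucc (mpos r S l))"
    by (rule osucc_gt)+
  have a2: "osucc (mpos r S l) < l" "osucc (osucc (mpos r S l)) < l"
    using osucc_less_limit[OF l] m by blast+
  show "mpos r S l < cpos r s S \<tau> l" "cpos r s S \<tau> l < (l::'k)"
    unfolding cpos_def using a1 a2 by auto
qed

lemma snew_tail:
  assumes lT: "l \<in> Tset r S" and fr: "finite {x. r x}" and fS: "finite S"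
  shows "snew r s S \<sigma> \<tau> (cpos r s S \<tau> l)"
    "\<And>x. cpos r s S \<tau> l < x \<Longrightarrow> x < (l::'k) \<Longrightarrow> \<not> snew r s S \<sigma> \<tau> x"
proof -
  have l: "is_limit l" using lT Tset_def by auto
  note mp = mpos_props[OF l fr fS] and cp = cpos_props[OF l fr fS, of s \<tau>]
  have notK: "x \<notin> Kset r" "x \<notin> S" if "mpos r S l < x" "x < l" for x
    using mp(2)[of x] that by auto
  show "snew r s S \<sigma> \<tau> (cpos r s S \<tau> l)"
    using notK[OF cp] lT unfolding snew_def Kset_def by auto
  fix x assume x: "cpos r s S \<tau> l < x" "x < l"
  have xm: "mpos r S l < x" using x cp by auto
  have "x \<notin> cpos r s S \<tau> ` Tset r S"
  proof
    assume "x \<in> cpos r s S \<tau> ` Tset r S"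
    then obtain l' where l': "l' \<in> Tset r S" "x = cpos r s S \<tau> l'" by blast
    have ll': "is_limit l'" using l' Tset_def by auto
    note cp' = cpos_props[OF ll' fr fS, of s \<tau>]
    consider "l' < l" | "l' = l" | "l < l'" by fastforce
    thus False
    proof cases
      case 1
      hence "l' \<le> mpos r S l" using mp(2) l' by blast
      thus False using cp' l' xm by auto
    next
      case 2 thus False using x l' by simp
    next
      case 3
      hence "l \<le> mpos r S l'" using mpos_props(2)[OF ll' fr fS] lT by blast
      thus False using cp' l' x by auto
    qed
  qed
  thus "\<not> snew r s S \<sigma> \<tau> x" using notK[OF xm x(2)] unfolding snew_def Kset_def by auto
qed

lemma lim_par_snew:
  assumes lT: "l \<in> Tset r S" and fr: "finite {x. r x}" and fS: "finite S"
  shows "lim_par l (snew r s S \<sigma> \<tau>) = tpar r s \<tau> (l::'k)"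
proof -
  have l: "is_limit l" using lT Tset_def by auto
  have o: "o_lim l (snew r s S \<sigma> \<tau>) = osucc (cpos r s S \<tau> l)"
    by (rule o_lim_eq[where r="snew r s S \<sigma> \<tau>" and c="cpos r s S \<tau> l", OF l cpos_props(2)[OF l fr fS, of s \<tau>] snew_tail(1)[OF lT fr fS, of s \<sigma> \<tau>]])
       (use snew_tail(2)[OF lT fr fS] in blast)
  show ?thesis unfolding lim_par_def o cpos_def
    by (auto simp: ord_even_succ)
qed

lemma snew_finite:
  assumes fr: "finite {x. r x}" and fS: "finite S"
  shows "finite {x. snew r s S \<sigma> \<tau> (x::'k)}"
  by (rule finite_subset[of _ "Kset r \<union> S \<union> cpos r s S \<tau> ` Tset r S"])
     (use Kset_finite[OF fr] Tset_finite[OF fr fS] fS in \<open>auto simp: snew_def Kset_def\<close>)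

lemma Wk_finite: "w \<in> Wk \<Longrightarrow> finite {x. wrec p w (x::'k)}"
  unfolding Wk_def by (cases p) (auto intro: record_finite)

lemma vpt_Wk:
  assumes w: "w \<in> (Wk :: 'k world set)" and fS: "finite S"
  shows "vpt i w S om \<in> Wk"
proof -
  have r: "is_record_kappa (wrec i w)" using w unfolding Wk_def by (cases i) auto
  have s: "is_record_kappa (snew (wrec i w) (wrec (other i) w) S (fst (snd om)) (snd (snd om)))"
    by (rule finite_record, rule snew_finite[OF Wk_finite[OF w] fS])
  show ?thesis using r s unfolding vpt_def Wk_def
    by (cases i) (auto simp: mkw_def wrec_def)
qed

lemma vpt_Pset:
  assumes w: "w \<in> (Wk :: 'k world set)" and fS: "finite S"
  shows "vpt i w S om \<in> Pset i w"
proof -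
  note fr = Wk_finite[OF w, of i]
  show ?thesis unfolding Pset_def
  proof (intro CollectI conjI allI impI)
    show "vpt i w S om \<in> Wk" by (rule vpt_Wk[OF w fS])
    show "wrec i (vpt i w S om) = wrec i w" by (simp add: vpt_def)
    show "fst (vpt i w S om) = fst w" if "wrec i w ozero" using that by (simp add: vpt_def)
    fix b show "wrec (other i) (vpt i w S om) b = wrec (other i) w b" if "wrec i w (osucc b)"
      using that by (simp add: vpt_def snew_def)
  next
    fix l assume l: "is_limit l \<and> wrec i w l"
    hence lT: "l \<in> Tset (wrec i w) S" by (simp add: Tset_def)
    show "lim_par l (wrec (other i) (vpt i w S om)) = lim_par l (wrec (other i) w)"
      using lim_par_snew[OF lT fr fS] l by (simp add: vpt_def tpar_def)
  qed
qed

lemma vpt_cong: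
  assumes u: "u \<in> Pset i w"
  shows "vpt i u S om = vpt i (w::'k world) S om"
proof -
  have r: "wrec i u = wrec i w" and c: "wrec i w ozero \<Longrightarrow> fst u = fst w"
    and b: "\<And>b. wrec i w (osucc b) \<Longrightarrow> wrec (other i) u b = wrec (other i) w b"
    and l: "\<And>l. is_limit l \<Longrightarrow> wrec i w l \<Longrightarrow> lim_par l (wrec (other i) u) = lim_par l (wrec (other i) w)"
    using u unfolding Pset_def by auto
  have cp: "cpos (wrec i w) (wrec (other i) u) S t l = cpos (wrec i w) (wrec (other i) w) S t l"
    if "l \<in> Tset (wrec i w) S" for t l
    using that l unfolding cpos_def tpar_def Tset_def by auto
  have "snew (wrec i w) (wrec (other i) u) S s' t = snew (wrec i w) (wrec (other i) w) S s' t" for s' t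
    unfolding snew_def fun_eq_iff using b cp by (auto simp: image_def)
  thus ?thesis unfolding vpt_def using r c by auto
qed

lemma snew_local_dir:
  assumes fr: "finite {x. r x}" "finite {x. r' x}" and fS: "finite S" and bS: "b \<in> S"
    and ba: "b < a" and rr: "\<And>z. z < a \<Longrightarrow> r z = r' z" and ss: "\<And>z. z < a \<Longrightarrow> s z = s' z"
    and zb: "z < (b::'k)" and zin: "z \<in> cpos r s S \<tau> ` Tset r S"
  shows "z \<in> cpos r' s' S \<tau> ` Tset r' S"
proof -
  obtain l where l: "l \<in> Tset r S" "z = cpos r s S \<tau> l" using zin by blast
  have il: "is_limit l" using l Tset_def by auto
  have "l \<le> b"
  proof (rule ccontr)
    assume "\<not> l \<le> b" hence "b < l" by simp
    hence "b \<le> mpos r S l" using mpos_props(2)[OF il fr(1) fS] bS by blast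
    thus False using cpos_props(1)[OF il fr(1) fS, of s \<tau>] l zb by auto
  qed
  hence la: "l < a" using ba by simp
  have lT': "l \<in> Tset r' S" using l rr[OF la] by (simp add: Tset_def)
  have Kx: "x \<in> Kset r \<longleftrightarrow> x \<in> Kset r'" if "x < l" for x
  proof -
    have "osucc x \<le> l" using osucc_le[OF that] .
    thus ?thesis using rr[of "osucc x"] la by (simp add: Kset_def)
  qed
  have Tx: "x \<in> Tset r S \<longleftrightarrow> x \<in> Tset r' S" if "x < l" for x
    using rr[of x] that la by (simp add: Tset_def)
  have "mpos r S l = mpos r' S l" unfolding mpos_def
    by (rule arg_cong[where f = Max]) (use Kx Tx in auto)
  moreover have "tpar r s \<tau> l = tpar r' s' \<tau> l"
    unfolding tpar_def using rr[OF la] lim_par_cong[of l s s'] ss la by auto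
  ultimately have "cpos r s S \<tau> l = cpos r' s' S \<tau> l" unfolding cpos_def by simp
  thus ?thesis using l lT' by auto
qed

lemma snew_local:
  assumes fr: "finite {x. r x}" "finite {x. r' x}" and fS: "finite S" and bS: "b \<in> S"
    and ba: "b < a" and rr: "\<And>z. z < a \<Longrightarrow> r z = r' z" and ss: "\<And>z. z < a \<Longrightarrow> s z = s' z"
    and zb: "z < (b::'k)"
  shows "snew r s S \<sigma> \<tau> z = snew r' s' S \<sigma> \<tau> z"
proof -
  have "osucc z \<le> b" using osucc_le[OF zb] .
  hence e1: "r (osucc z) = r' (osucc z)" using rr ba by simp
  have e2: "s z = s' z" using ss zb ba by simp
  have e3: "z \<in> cpos r s S \<tau> ` Tset r S \<longleftrightarrow> z \<in> cpos r' s' S \<tau> ` Tset r' S"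
  proof -
    have rr': "\<And>z. z < a \<Longrightarrow> r' z = r z" and ss': "\<And>z. z < a \<Longrightarrow> s' z = s z"
      using rr ss by auto
    show ?thesis using snew_local_dir[where r=r and r'=r' and s=s and s'=s' and z=z and \<tau>=\<tau> and a=a and b=b and S=S, OF fr fS bS ba rr ss zb]
       snew_local_dir[where r=r' and r'=r and s=s' and s'=s and z=z and \<tau>=\<tau> and a=a and b=b and S=S, OF fr(2) fr(1) fS bS ba rr' ss' zb]
      by blast
  qed
  show ?thesis unfolding snew_def using e1 e2 e3 by simp
qed

lemma mu_local:
  assumes u: "u \<in> Wk" and v: "v \<in> (Wk :: 'k world set)" and fS: "finite S" and bS: "b \<in> S"
    and ba: "b < a" and e: "restr a u = restr a v"
  shows "mu i S u (preim b E) = mu i S v (preim b E)"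
proof -
  have rr: "\<And>z. z < a \<Longrightarrow> wrec i u z = wrec i v z" and ss: "\<And>z. z < a \<Longrightarrow> wrec (other i) u z = wrec (other i) v z"
    using restr_eqD(2)[OF e] by auto
  have cz: "wrec i u ozero = wrec i v ozero" using rr ozero_le[of b] ba by simp
  have "restr b (vpt i u S om) = restr b (vpt i v S om)" for om
  proof -
    have "(\<lambda>z. z < b \<and> wrec i u z) = (\<lambda>z. z < b \<and> wrec i v z)"
      using rr ba by auto
    moreover have "(\<lambda>z. z < b \<and> snew (wrec i u) (wrec (other i) u) S (fst (snd om)) (snd (snd om)) z)
      = (\<lambda>z. z < b \<and> snew (wrec i v) (wrec (other i) v) S (fst (snd om)) (snd (snd om)) z)"
      using snew_local[OF Wk_finite[OF u] Wk_finite[OF v] fS bS ba rr ss] by auto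
    moreover have "(if wrec i u ozero then fst u else fst om) = (if wrec i v ozero then fst v else fst om)"
      using cz restr_eqD(1)[OF e] by simp
    ultimately show ?thesis unfolding vpt_def restr_mkw by simp
  qed
  hence "{om \<in> Om S. vpt i u S om \<in> preim b E} = {om \<in> Om S. vpt i v S om \<in> preim b E}"
    using vpt_Wk[OF u fS] vpt_Wk[OF v fS] by (auto simp: preim_def)
  thus ?thesis unfolding mu_def by simp
qed

end

definition tog :: "'a \<Rightarrow> 'a set \<Rightarrow> 'a set" where
  "tog b X = (if b \<in> X then X - {b} else insert b X)"
fun flipc :: "coin \<Rightarrow> coin" where "flipc H = T" | "flipc T = H"

lemma tog_props: "b \<in> S \<Longrightarrow> X \<subseteq> S \<Longrightarrow> tog b X \<subseteq> S" "tog b (tog b X) = X" "b \<in> tog b X \<longleftrightarrow> b \<notin> X"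
  unfolding tog_def by auto

lemma flipc_props: "flipc (flipc c) = c" "flipc c = d \<longleftrightarrow> c \<noteq> d"
  by (cases c; cases d; simp)+

lemma mu_nonneg: "0 \<le> mu i S w A"
  unfolding mu_def by simp

lemma mu_range_all: "mu i S w A \<in> {0..1}"
proof (cases "card (Om S) = 0")
  case True thus ?thesis unfolding mu_def by simp
next
  case False
  hence "0 < card (Om S)" by simp
  hence "finite (Om S)" by (simp add: card_gt_0_iff)
  hence "card {om \<in> Om S. vpt i w S om \<in> A} \<le> card (Om S)" by (intro card_mono) auto
  thus ?thesis unfolding mu_def using False by (simp add: divide_le_eq_1)
qed

context kap begin

lemma vpt_fields: "fst (vpt i w S om) = (if wrec i w ozero then fst w else fst om)"
  "wrec i (vpt i w S om) = wrec i w"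
  "wrec (other i) (vpt i w S om) = snew (wrec i w) (wrec (other i) w) S (fst (snd om)) (snd (snd om))"
  by (simp_all add: vpt_def)

lemma mu_Wk: "w \<in> (Wk :: 'k world set) \<Longrightarrow> finite S \<Longrightarrow> mu i S w Wk = 1"
  by (rule mu_one) (auto intro: vpt_Wk)

lemma mu_Pset: "w \<in> (Wk :: 'k world set) \<Longrightarrow> finite S \<Longrightarrow> mu i S w (Pset i w) = 1"
  by (rule mu_one) (auto intro: vpt_Pset)

lemma mu_cong: "u \<in> Pset i (w :: 'k world) \<Longrightarrow> mu i S u A = mu i S w A"
  unfolding mu_def using vpt_cong[of u i w S] by simp

lemma mu_coin:
  assumes w: "w \<in> (Wk :: 'k world set)" and fS: "finite S"
  shows "mu i S w {u \<in> Wk. fst u = fst w} = (if wrec i w ozero then 1 else 1/2)"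
proof (cases "wrec i w ozero")
  case True
  thus ?thesis by simp (rule mu_one[OF fS], use vpt_Wk[OF w fS] in \<open>auto simp: vpt_fields\<close>)
next
  case False
  have "mu i S w {u \<in> Wk. fst u = fst w} = 1/2"
  proof (rule mu_half[OF fS, where f="\<lambda>(c,x,y). (flipc c, x, y)"])
    fix om assume "om \<in> Om S"
    show "(case om of (c, x, y) \<Rightarrow> (flipc c, x, y)) \<in> Om S" using \<open>om \<in> Om S\<close>
      by (auto simp: Om_def split: prod.splits)
    show "(case case om of (c, x, y) \<Rightarrow> (flipc c, x, y) of (c, x, y) \<Rightarrow> (flipc c, x, y)) = om"
      by (auto simp: flipc_props split: prod.splits)
    show "(vpt i w S (case om of (c, x, y) \<Rightarrow> (flipc c, x, y)) \<in> {u \<in> Wk. fst u = fst w}) =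
          (vpt i w S om \<notin> {u \<in> Wk. fst u = fst w})"
      using False vpt_Wk[OF w fS] by (auto simp: vpt_fields flipc_props split: prod.splits)
  qed
  thus ?thesis using False by simp
qed

lemma mu_bit:
  assumes w: "w \<in> (Wk :: 'k world set)" and fS: "finite S" and bS: "b \<in> S"
  shows "mu i S w {u \<in> Wk. wrec (other i) u b = wrec (other i) w b} = (if wrec i w (osucc b) then 1 else 1/2)"
proof (cases "wrec i w (osucc b)")
  case True
  thus ?thesis by simp (rule mu_one[OF fS], use vpt_Wk[OF w fS] in \<open>auto simp: vpt_fields snew_def\<close>)
next
  case False
  have "mu i S w {u \<in> Wk. wrec (other i) u b = wrec (other i) w b} = 1/2"
  proof (rule mu_half[OF fS, where f="\<lambda>(c,x,y). (c, tog b x, y)"])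
    fix om assume "om \<in> Om S"
    thus "(case om of (c, x, y) \<Rightarrow> (c, tog b x, y)) \<in> Om S" using bS
      by (auto simp: Om_def tog_def split: prod.splits)
    show "(case case om of (c, x, y) \<Rightarrow> (c, tog b x, y) of (c, x, y) \<Rightarrow> (c, tog b x, y)) = om"
      by (auto simp: tog_props split: prod.splits)
    show "(vpt i w S (case om of (c, x, y) \<Rightarrow> (c, tog b x, y)) \<in> {u \<in> Wk. wrec (other i) u b = wrec (other i) w b}) =
          (vpt i w S om \<notin> {u \<in> Wk. wrec (other i) u b = wrec (other i) w b})"
      using False vpt_Wk[OF w fS] bS by (auto simp: vpt_fields snew_def tog_props split: prod.splits)
  qed
  thus ?thesis using False by simp
qed

lemma mu_lim:
  assumes w: "w \<in> (Wk :: 'k world set)" and fS: "finite S" and lS: "l \<in> S" and l: "is_limit l"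
  shows "mu i S w {u \<in> Wk. lim_par l (wrec (other i) u) = lim_par l (wrec (other i) w)} = (if wrec i w l then 1 else 1/2)"
proof -
  have lT: "l \<in> Tset (wrec i w) S" using lS l by (simp add: Tset_def)
  note lp = lim_par_snew[OF lT Wk_finite[OF w] fS]
  show ?thesis
  proof (cases "wrec i w l")
    case True
    thus ?thesis by simp (rule mu_one[OF fS], use vpt_Wk[OF w fS] lp in \<open>auto simp: vpt_fields tpar_def\<close>)
  next
    case False
    have "mu i S w {u \<in> Wk. lim_par l (wrec (other i) u) = lim_par l (wrec (other i) w)} = 1/2"
    proof (rule mu_half[OF fS, where f="\<lambda>(c,x,y). (c, x, tog l y)"])
      fix om assume "om \<in> Om S"
      thus "(case om of (c, x, y) \<Rightarrow> (c, x, tog l y)) \<in> Om S" using lS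
        by (auto simp: Om_def tog_def split: prod.splits)
      show "(case case om of (c, x, y) \<Rightarrow> (c, x, tog l y) of (c, x, y) \<Rightarrow> (c, x, tog l y)) = om"
        by (auto simp: tog_props split: prod.splits)
      show "(vpt i w S (case om of (c, x, y) \<Rightarrow> (c, x, tog l y)) \<in> {u \<in> Wk. lim_par l (wrec (other i) u) = lim_par l (wrec (other i) w)}) =
            (vpt i w S om \<notin> {u \<in> Wk. lim_par l (wrec (other i) u) = lim_par l (wrec (other i) w)})"
        using False vpt_Wk[OF w fS] lp by (auto simp: vpt_fields tpar_def tog_props split: prod.splits)
    qed
    thus ?thesis using False by simp
  qed
qed

end


lemma cluster_exists:
  fixes f :: "'i \<Rightarrow> 'a \<Rightarrow> real"
  assumes F: "F \<noteq> bot" and rng: "\<And>i x. f i x \<in> {0..1}"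
  shows "\<exists>g. \<forall>C. closed C \<longrightarrow> eventually (\<lambda>i. f i \<in> C) F \<longrightarrow> g \<in> C"
proof -
  define K where "K = PiE UNIV (\<lambda>_::'a. {0..1::real})"
  have "compactin (product_topology (\<lambda>_. euclidean) UNIV) K"
    unfolding K_def compactin_PiE by (simp add: compactin_euclidean_iff)
  hence cK: "compact K" by (simp add: euclidean_product_topology compactin_euclidean_iff)
  have Fb: "filtermap f F \<noteq> bot" using F by (simp add: filtermap_bot_iff)
  have "eventually (\<lambda>x. x \<in> K) (filtermap f F)"
    using rng by (simp add: eventually_filtermap K_def PiE_iff)
  then obtain g where g: "g \<in> K" "inf (nhds g) (filtermap f F) \<noteq> bot"
    using cK Fb unfolding compact_filter by blast
  show ?thesis
  proof (intro exI allI impI)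
    fix C :: "('a \<Rightarrow> real) set" assume C: "closed C" "eventually (\<lambda>i. f i \<in> C) F"
    show "g \<in> C"
    proof (rule ccontr)
      assume "g \<notin> C"
      hence "eventually (\<lambda>h. h \<notin> C) (nhds g)" using C(1)
        by (simp add: eventually_nhds) (metis open_Compl Compl_iff)
      moreover have "eventually (\<lambda>h. h \<in> C) (filtermap f F)" using C(2) by (simp add: eventually_filtermap)
      ultimately have "eventually (\<lambda>_. False) (inf (nhds g) (filtermap f F))"
        unfolding eventually_inf by blast
      thus False using g(2) by (simp add: eventually_False)
    qed
  qed
qed

lemma closed_eq_c: "closed {h::'a\<Rightarrow>real. h p = c}"
  by (intro closed_Collect_eq continuous_intros) simp_all
lemma closed_eq2: "closed {h::'a\<Rightarrow>real. h p = h q}"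
  by (intro closed_Collect_eq) simp_all
lemma closed_add: "closed {h::'a\<Rightarrow>real. h p = h q + h r}"
  by (intro closed_Collect_eq continuous_intros) simp_all
lemma closed_ge: "closed {h::'a\<Rightarrow>real. 0 \<le> h p}"
  by (intro closed_Collect_le continuous_intros) simp_all

lemma nomax_from_card:
  assumes inf: "infinite (UNIV :: 'k::wellorder set)"
    and card: "\<forall>x::'k. (card_of {y. y < x}, card_of (UNIV :: 'k set)) \<in> ordLess"
  shows "\<exists>y. (x::'k) < y"
proof (rule ccontr)
  assume "\<not> (\<exists>y. x < y)"
  hence U: "(UNIV::'k set) = {y. y < x} \<union> {x}" by (auto simp: not_less order_le_less)
  have a: "(card_of {y. y<x}, card_of (UNIV::'k set)) \<in> ordLess" using card by blast
  have b: "(card_of {x}, card_of (UNIV::'k set)) \<in> ordLess"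
    by (rule finite_ordLess_infinite[OF card_of_Well_order card_of_Well_order])
       (use inf in \<open>simp_all add: Field_card_of\<close>)
  have "(card_of ({y. y<x} \<union> {x}), card_of (UNIV::'k set)) \<in> ordLess" by (rule card_of_Un_ordLess_infinite[OF inf a b])
  hence "(card_of (UNIV::'k set), card_of (UNIV::'k set)) \<in> ordLess" using U by simp
  thus False using ordLess_irreflexive by blast
qed

theorem theorem2:
  fixes i :: player
  assumes inf: "infinite (UNIV :: 'k::wellorder set)"
    and card: "\<forall>x::'k. (card_of {y. y < x}, card_of (UNIV :: 'k set)) \<in> ordLess"
    and regular: "\<forall>K::'k set. (\<forall>x. \<exists>y\<in>K. x \<le> y) \<longrightarrow> (card_of K, card_of (UNIV :: 'k set)) \<in> ordIso"
  shows "\<exists>Ti :: 'k world \<Rightarrow> ('k world set \<Rightarrow> real).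
    \<forall>w \<in> (Wk :: 'k world set).
      fa_prob Wk (Ti w)
    \<and> (\<forall>u \<in> Pset i w. Ti u = Ti w)
    \<and> Ti w (Pset i w) = 1
    \<and> Ti w {u \<in> Wk. fst u = fst w} = (if wrec i w ozero then 1 else 1/2)
    \<and> (\<forall>b::'k. Ti w {u \<in> Wk. wrec (other i) u b = wrec (other i) w b}
                = (if wrec i w (osucc b) then 1 else 1/2))
    \<and> (\<forall>l::'k. is_limit l \<longrightarrow>
          Ti w {u \<in> Wk. lim_par l (wrec (other i) u) = lim_par l (wrec (other i) w)}
            = (if wrec i w l then 1 else 1/2))
    \<and> (\<forall>b a :: 'k. b < a \<longrightarrow> (\<forall>u \<in> Wk. \<forall>v \<in> Wk. \<forall>E. E \<subseteq> W_at b \<longrightarrow>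
          restr a u = restr a v \<longrightarrow> Ti u (preim b E) = Ti v (preim b E)))"
proof -
  interpret kap "TYPE('k)"
    by unfold_locales (rule nomax_from_card[OF inf card])
  define F where "F = finite_subsets_at_top (UNIV :: 'k set)"
  define f where "f S = (\<lambda>p::'k world \<times> 'k world set. mu i S (fst p) (snd p))" for S :: "'k set"
  have "F \<noteq> bot" unfolding F_def by simp
  then obtain g where g: "\<And>C. closed C \<Longrightarrow> eventually (\<lambda>S. f S \<in> C) F \<Longrightarrow> g \<in> C"
    using cluster_exists[of F f] mu_range_all unfolding f_def by blast
  have G1: "g p = c" if "eventually (\<lambda>S. f S p = c) F" for p c
    using g[OF closed_eq_c[of p c]] that by simp
  have G2: "g p = g q + g r" if "eventually (\<lambda>S. f S p = f S q + f S r) F" for p q r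
    using g[OF closed_add[of p q r]] that by simp
  have G4: "g p = g q" if "eventually (\<lambda>S. f S p = f S q) F" for p q
    using g[OF closed_eq2[of p q]] that by simp
  have G3: "0 \<le> g p" for p
  proof -
    have "eventually (\<lambda>S. f S \<in> {h. 0 \<le> h p}) F"
      by (rule always_eventually) (simp add: f_def mu_nonneg)
    thus ?thesis using g[OF closed_ge[of p]] by simp
  qed
  have evfin: "eventually (\<lambda>S. finite S) F"
    unfolding F_def by (rule eventually_finite_subsets_at_top_weakI) simp
  have evmem: "eventually (\<lambda>S. finite S \<and> b \<in> S) F" for b
    unfolding F_def eventually_finite_subsets_at_top by (intro exI[of _ "{b}"]) auto
  have P1: "fa_prob Wk (\<lambda>A. g (w, A))" if w: "w \<in> Wk" for w
    unfolding fa_prob_def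
  proof (intro conjI allI impI)
    show "g (w, Wk) = 1"
      by (rule G1, rule eventually_mono[OF evfin]) (simp add: f_def mu_Wk[OF w])
    fix A show "0 \<le> g (w, A)" by (rule G3)
  next
    fix A B :: "'k world set" assume "A \<subseteq> Wk \<and> B \<subseteq> Wk \<and> A \<inter> B = {}"
    hence d: "A \<inter> B = {}" by blast
    show "g (w, A \<union> B) = g (w, A) + g (w, B)"
      by (rule G2, rule eventually_mono[OF evfin]) (simp add: f_def mu_add[OF _ d])
  qed
  have P2: "(\<lambda>A. g (u, A)) = (\<lambda>A. g (w, A))" if "u \<in> Pset i w" for u w
  proof
    fix A show "g (u, A) = g (w, A)"
      by (rule G4, rule eventually_mono[OF evfin]) (simp add: f_def mu_cong[OF that])
  qed
  have P3: "g (w, Pset i w) = 1" if w: "w \<in> Wk" for w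
    by (rule G1, rule eventually_mono[OF evfin]) (simp add: f_def mu_Pset[OF w])
  have P4: "g (w, {u \<in> Wk. fst u = fst w}) = (if wrec i w ozero then 1 else 1/2)" if w: "w \<in> Wk" for w
    by (rule G1, rule eventually_mono[OF evfin]) (simp add: f_def mu_coin[OF w])
  have P5: "g (w, {u \<in> Wk. wrec (other i) u b = wrec (other i) w b}) = (if wrec i w (osucc b) then 1 else 1/2)"
    if w: "w \<in> Wk" for w b
    by (rule G1, rule eventually_mono[OF evmem[of b]]) (simp add: f_def mu_bit[OF w])
  have P6: "g (w, {u \<in> Wk. lim_par l (wrec (other i) u) = lim_par l (wrec (other i) w)}) = (if wrec i w l then 1 else 1/2)"
    if w: "w \<in> Wk" and l: "is_limit l" for w l
    by (rule G1, rule eventually_mono[OF evmem[of l]]) (simp add: f_def mu_lim[OF w _ _ l])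
  have P7: "g (u, preim b E) = g (v, preim b E)"
    if "b < a" "u \<in> Wk" "v \<in> Wk" "restr a u = restr a v" for u v a b E
    by (rule G4, rule eventually_mono[OF evmem[of b]]) (simp add: f_def mu_local[OF that(2,3) _ _ that(1,4)])
  show ?thesis
    apply (rule exI[of _ "\<lambda>w A. g (w, A)"])
    apply (intro ballI conjI allI impI)
    subgoal using P1 by blast
    subgoal using P2 by blast
    subgoal using P3 by blast
    subgoal using P4 by blast
    subgoal using P5 by blast
    subgoal using P6 by blast
    subgoal using P7 by blast
    done
qed

end
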